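(* There is a Katětov functor $F\colon\mathcal U_{\mathrm{fin}}\to\mathcal U_{\mathrm{fin}}$, i.e. a functor $F$ together with a natural transformation $\eta\colon\mathrm{id}_{\mathcal U_{\mathrm{fin}}}\to F$ such that for every finite two-sorted ultrametric space $X$ and every one-point extension $f\colon X\to Y$ there is a dc-embedding $g\colon Y\to F(X)$ with $g\circ f=\eta_X$.
   Context: A two-sorted ultrametric space is $(X,d_X,D_X)$ with $D_X$ a linear order with least element $0$, $d_X\colon X\times X\to D_X$ symmetric, $d_X(x,y)=0\iff x=y$, $d_X(x,z)\le\max\{d_X(x,y),d_X(y,z)\}$; finite if both sorts are finite. $\mathcal U_{\mathrm{fin}}$ is the category of finite two-sorted ultrametric spaces with dc-embeddings (an injection $f$ on points with an order embedding $D_f$ of distance sets fixing $0$ such that $d(f(x),f(x'))=D_f(d(x,x'))$). A one-point extension is a dc-embedding between finite spaces that (up to isomorphism) either adds exactly one new distance and no new points, or adds exactly one new point and no new distances. *)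

theory Defs
  imports Main
begin

text \<open>Finite two-sorted ultrametric spaces, represented concretely: points are natural
numbers, the distance sort is a finite set of natural numbers ordered by the usual order
of nat, with least element 0.  Every finite two-sorted ultrametric space is isomorphic to
one of this form, so the resulting category is equivalent to U_fin.\<close>

record uspace =
  pts   :: "nat set"
  dists :: "nat set"
  dist  :: "nat \<Rightarrow> nat \<Rightarrow> nat"

definition fin_ultra :: "uspace \<Rightarrow> bool" where
  "fin_ultra X \<longleftrightarrow>
     finite (pts X) \<and> finite (dists X) \<and> (0::nat) \<in> dists X \<and>
     (\<forall>x\<in>pts X. \<forall>y\<in>pts X. dist X x y \<in> dists X) \<and>
     (\<forall>x\<in>pts X. \<forall>y\<in>pts X. dist X x y = dist X y x) \<and>
     (\<forall>x\<in>pts X. \<forall>y\<in>pts X. dist X x y = 0 \<longleftrightarrow> x = y) \<and>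
     (\<forall>x\<in>pts X. \<forall>y\<in>pts X. \<forall>z\<in>pts X. dist X x z \<le> max (dist X x y) (dist X y z))"

text \<open>A morphism is a pair (map on points, map on distances).\<close>
type_synonym umor = "(nat \<Rightarrow> nat) \<times> (nat \<Rightarrow> nat)"

definition dc_emb :: "uspace \<Rightarrow> uspace \<Rightarrow> umor \<Rightarrow> bool" where
  "dc_emb X Y m \<longleftrightarrow>
     fst m ` pts X \<subseteq> pts Y \<and> inj_on (fst m) (pts X) \<and>
     snd m ` dists X \<subseteq> dists Y \<and>
     (\<forall>a\<in>dists X. \<forall>b\<in>dists X. a \<le> b \<longleftrightarrow> snd m a \<le> snd m b) \<and>
     snd m 0 = 0 \<and>
     (\<forall>x\<in>pts X. \<forall>x'\<in>pts X. dist Y (fst m x) (fst m x') = snd m (dist X x x'))"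

definition mcomp :: "umor \<Rightarrow> umor \<Rightarrow> umor" where
  "mcomp g f = (fst g \<circ> fst f, snd g \<circ> snd f)"

definition mid :: umor where
  "mid = (id, id)"

text \<open>Equality of morphisms with domain X (functions are only relevant on X).\<close>
definition meq :: "uspace \<Rightarrow> umor \<Rightarrow> umor \<Rightarrow> bool" where
  "meq X f g \<longleftrightarrow> (\<forall>x\<in>pts X. fst f x = fst g x) \<and> (\<forall>a\<in>dists X. snd f a = snd g a)"

definition one_point_ext :: "uspace \<Rightarrow> uspace \<Rightarrow> umor \<Rightarrow> bool" where
  "one_point_ext X Y f \<longleftrightarrow> dc_emb X Y f \<and>
     ((fst f ` pts X = pts Y \<and> card (dists Y - snd f ` dists X) = 1) \<or>
      (card (pts Y - fst f ` pts X) = 1 \<and> snd f ` dists X = dists Y))"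

text \<open>F on objects, Fm X Y f the action on a morphism f : X \<rightarrow> Y, eta the components.\<close>
definition is_functor :: "(uspace \<Rightarrow> uspace) \<Rightarrow> (uspace \<Rightarrow> uspace \<Rightarrow> umor \<Rightarrow> umor) \<Rightarrow> bool" where
  "is_functor F Fm \<longleftrightarrow>
     (\<forall>X. fin_ultra X \<longrightarrow> fin_ultra (F X)) \<and>
     (\<forall>X Y f. fin_ultra X \<and> fin_ultra Y \<and> dc_emb X Y f \<longrightarrow> dc_emb (F X) (F Y) (Fm X Y f)) \<and>
     (\<forall>X Y f f'. fin_ultra X \<and> fin_ultra Y \<and> dc_emb X Y f \<and> dc_emb X Y f' \<and> meq X f f'
        \<longrightarrow> meq (F X) (Fm X Y f) (Fm X Y f')) \<and>
     (\<forall>X. fin_ultra X \<longrightarrow> meq (F X) (Fm X X mid) mid) \<and>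
     (\<forall>X Y Z f g. fin_ultra X \<and> fin_ultra Y \<and> fin_ultra Z \<and> dc_emb X Y f \<and> dc_emb Y Z g
        \<longrightarrow> meq (F X) (Fm X Z (mcomp g f)) (mcomp (Fm Y Z g) (Fm X Y f)))"

definition is_nat_trans_id :: "(uspace \<Rightarrow> uspace) \<Rightarrow> (uspace \<Rightarrow> uspace \<Rightarrow> umor \<Rightarrow> umor)
     \<Rightarrow> (uspace \<Rightarrow> umor) \<Rightarrow> bool" where
  "is_nat_trans_id F Fm eta \<longleftrightarrow>
     (\<forall>X. fin_ultra X \<longrightarrow> dc_emb X (F X) (eta X)) \<and>
     (\<forall>X Y f. fin_ultra X \<and> fin_ultra Y \<and> dc_emb X Y f
        \<longrightarrow> meq X (mcomp (Fm X Y f) (eta X)) (mcomp (eta Y) f))"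

definition katetov_functor :: "(uspace \<Rightarrow> uspace) \<Rightarrow> (uspace \<Rightarrow> uspace \<Rightarrow> umor \<Rightarrow> umor)
     \<Rightarrow> (uspace \<Rightarrow> umor) \<Rightarrow> bool" where
  "katetov_functor F Fm eta \<longleftrightarrow>
     is_functor F Fm \<and> is_nat_trans_id F Fm eta \<and>
     (\<forall>X Y f. fin_ultra X \<and> fin_ultra Y \<and> one_point_ext X Y f
        \<longrightarrow> (\<exists>g. dc_emb Y (F X) g \<and> meq X (mcomp g f) (eta X)))"

end

theory Submission
  imports Defs "HOL-Library.Countable"
begin


lemma fuD:
  assumes "fin_ultra X"
  shows "finite (pts X)" "finite (dists X)" "0 \<in> dists X"
    "\<And>x y. x \<in> pts X \<Longrightarrow> y \<in> pts X \<Longrightarrow> dist X x y \<in> dists X"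
    "\<And>x y. x \<in> pts X \<Longrightarrow> y \<in> pts X \<Longrightarrow> dist X x y = dist X y x"
    "\<And>x y. x \<in> pts X \<Longrightarrow> y \<in> pts X \<Longrightarrow> dist X x y = 0 \<longleftrightarrow> x = y"
    "\<And>x y z. x \<in> pts X \<Longrightarrow> y \<in> pts X \<Longrightarrow> z \<in> pts X \<Longrightarrow> dist X x z \<le> max (dist X x y) (dist X y z)"
  using assms unfolding fin_ultra_def by (elim conjE; simp)+

lemma fu_self: "fin_ultra X \<Longrightarrow> x \<in> pts X \<Longrightarrow> dist X x x = 0"
  using fuD(6) by blast

lemma dcD:
  assumes "dc_emb X Y f"
  shows "\<And>x. x \<in> pts X \<Longrightarrow> fst f x \<in> pts Y" "inj_on (fst f) (pts X)"
    "\<And>a. a \<in> dists X \<Longrightarrow> snd f a \<in> dists Y"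
    "\<And>a b. a \<in> dists X \<Longrightarrow> b \<in> dists X \<Longrightarrow> snd f a \<le> snd f b \<longleftrightarrow> a \<le> b"
    "snd f 0 = 0"
    "\<And>x x'. x \<in> pts X \<Longrightarrow> x' \<in> pts X \<Longrightarrow> dist Y (fst f x) (fst f x') = snd f (dist X x x')"
  using assms unfolding dc_emb_def by (elim conjE; force simp: image_subset_iff)+

lemma dc_less: assumes "dc_emb X Y f" "a \<in> dists X" "b \<in> dists X" shows "snd f a < snd f b \<longleftrightarrow> a < b"
  using dcD(4)[OF assms(1) assms(3,2)] by (simp add: not_le[symmetric])

lemma dc_eq: assumes "dc_emb X Y f" "a \<in> dists X" "b \<in> dists X" shows "snd f a = snd f b \<longleftrightarrow> a = b"
proof -
  have A: "snd f a \<le> snd f b \<longleftrightarrow> a \<le> b" "snd f b \<le> snd f a \<longleftrightarrow> b \<le> a"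
    using dcD(4)[OF assms(1) assms(2,3)] dcD(4)[OF assms(1) assms(3,2)] by blast+
  show ?thesis
  proof
    assume "snd f a = snd f b" then show "a = b" using A by (metis antisym order_refl)
  qed simp
qed

lemma dc_inj: "dc_emb X Y f \<Longrightarrow> inj_on (snd f) (dists X)"
  using dc_eq unfolding inj_on_def by blast

lemma dc_max: assumes "dc_emb X Y f" "a \<in> dists X" "b \<in> dists X" shows "snd f (max a b) = max (snd f a) (snd f b)"
  using dcD(4)[OF assms(1) assms(2,3)] by (simp add: max_def)

lemma dc_pos: assumes "dc_emb X Y f" "fin_ultra X" "a \<in> dists X" "0 < a" shows "0 < snd f a"
  using dc_less[OF assms(1) fuD(3)[OF assms(2)] assms(3)] dcD(5)[OF assms(1)] assms(4) by simp

section \<open>Katetov functions\<close>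

definition K :: "uspace \<Rightarrow> (nat \<Rightarrow> nat) set" where
  "K X = {h. pts X \<noteq> {} \<and> (\<forall>x. x \<notin> pts X \<longrightarrow> h x = 0) \<and> (\<forall>x\<in>pts X. h x \<in> dists X \<and> 0 < h x) \<and>
     (\<forall>x\<in>pts X. \<forall>y\<in>pts X. h x \<le> max (h y) (dist X x y) \<and> dist X x y \<le> max (h x) (h y))}"

lemma KD:
  assumes "h \<in> K X"
  shows "pts X \<noteq> {}" "\<And>x. x \<notin> pts X \<Longrightarrow> h x = 0" "\<And>x. x \<in> pts X \<Longrightarrow> h x \<in> dists X"
    "\<And>x. x \<in> pts X \<Longrightarrow> 0 < h x"
    "\<And>x y. x \<in> pts X \<Longrightarrow> y \<in> pts X \<Longrightarrow> h x \<le> max (h y) (dist X x y)"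
    "\<And>x y. x \<in> pts X \<Longrightarrow> y \<in> pts X \<Longrightarrow> dist X x y \<le> max (h x) (h y)"
  using assms unfolding K_def mem_Collect_eq by (elim conjE; simp)+

lemma K_eqI: "h \<in> K X \<Longrightarrow> k \<in> K X \<Longrightarrow> (\<And>x. x \<in> pts X \<Longrightarrow> h x = k x) \<Longrightarrow> h = k"
  using KD(2) by (metis ext)

lemma K_finite: assumes "fin_ultra X" shows "finite (K X)"
proof -
  have "K X \<subseteq> {f. \<forall>x. (x \<in> pts X \<longrightarrow> f x \<in> dists X) \<and> (x \<notin> pts X \<longrightarrow> f x = 0)}"
    using KD by blast
  then show ?thesis using finite_set_of_finite_funs[OF fuD(1,2)[OF assms]] finite_subset by blast
qed

definition kd :: "uspace \<Rightarrow> (nat \<Rightarrow> nat) \<Rightarrow> (nat \<Rightarrow> nat) \<Rightarrow> nat" where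
  "kd X h k = (if h = k then 0 else Min ((\<lambda>x. max (h x) (k x)) ` pts X))"

lemma kd_le: assumes "fin_ultra X" "h \<in> K X" "k \<in> K X" "x \<in> pts X"
  shows "kd X h k \<le> max (h x) (k x)"
  using assms fuD(1) unfolding kd_def by (auto intro!: Min_le)

lemma kd_in: assumes "fin_ultra X" "h \<in> K X" "k \<in> K X" "h \<noteq> k"
  shows "\<exists>y\<in>pts X. kd X h k = max (h y) (k y)"
proof -
  have "Min ((\<lambda>x. max (h x) (k x)) ` pts X) \<in> (\<lambda>x. max (h x) (k x)) ` pts X"
    using assms fuD(1) KD(1) by (intro Min_in) auto
  then show ?thesis using assms unfolding kd_def by auto
qed

lemma kd_sym: "kd X h k = kd X k h"
  unfolding kd_def by (simp add: max.commute)

lemma kat_le: assumes X: "fin_ultra X" and h: "h \<in> K X" and k: "k \<in> K X" and x: "x \<in> pts X"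
  shows "h x \<le> max (kd X h k) (k x)"
proof (cases "h = k")
  case True then show ?thesis by simp
next
  case False
  then obtain y where y: "y \<in> pts X" "kd X h k = max (h y) (k y)" using kd_in assms by blast
  show ?thesis
  proof (rule ccontr)
    assume "\<not> ?thesis"
    then have a: "h x > kd X h k" "h x > k x" by auto
    have "h x \<le> max (h y) (dist X x y)" using KD(5)[OF h x y(1)] .
    moreover have "dist X x y \<le> max (k x) (k y)" using KD(6)[OF k x y(1)] .
    ultimately show False using a y(2) by linarith
  qed
qed

lemma kd_witness: assumes X: "fin_ultra X" and h: "h \<in> K X" and k: "k \<in> K X" and x: "x \<in> pts X"
  and ne: "h x \<noteq> k x"
  shows "kd X h k = max (h x) (k x)"
  using kat_le[OF X h k x] kat_le[OF X k h x] kd_le[OF X h k x] ne kd_sym[of X h k]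
  by (auto simp: max_def split: if_splits)

lemma kd_tri: assumes X: "fin_ultra X" and h: "h \<in> K X" and k: "k \<in> K X" and l: "l \<in> K X"
  shows "kd X h l \<le> max (kd X h k) (kd X k l)"
proof (cases "h = k")
  case True then show ?thesis by simp
next
  case False
  then obtain y where y: "y \<in> pts X" "kd X h k = max (h y) (k y)" using kd_in assms by blast
  have "kd X h l \<le> max (h y) (l y)" using kd_le[OF X h l y(1)] .
  moreover have "l y \<le> max (kd X l k) (k y)" using kat_le[OF X l k y(1)] .
  ultimately show ?thesis using y(2) kd_sym[of X l k] by linarith
qed

lemma kd_zero: assumes X: "fin_ultra X" and h: "h \<in> K X" and k: "k \<in> K X"
  shows "kd X h k = 0 \<longleftrightarrow> h = k"
proof (cases "h = k")
  case False
  then obtain y where y: "y \<in> pts X" "kd X h k = max (h y) (k y)" using kd_in assms by blast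
  then show ?thesis using KD(4)[OF h y(1)] False by auto
qed (simp add: kd_def)

lemma kd_D: assumes X: "fin_ultra X" and h: "h \<in> K X" and k: "k \<in> K X"
  shows "kd X h k \<in> dists X"
proof (cases "h = k")
  case False
  then obtain y where y: "y \<in> pts X" "kd X h k = max (h y) (k y)" using kd_in assms by blast
  then show ?thesis using KD(3)[OF h y(1)] KD(3)[OF k y(1)] by (simp add: max_def)
qed (simp add: kd_def fuD(3)[OF X])



datatype fp = Star | Pt nat | Kf "nat \<Rightarrow> nat"

definition TT :: "uspace \<Rightarrow> nat" where "TT X = 2 * Max (dists X) + 2"

fun dF :: "uspace \<Rightarrow> fp \<Rightarrow> fp \<Rightarrow> nat" where
  "dF X Star Star = 0"
| "dF X Star _ = TT X"
| "dF X _ Star = TT X"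
| "dF X (Pt x) (Pt y) = 2 * dist X x y"
| "dF X (Pt x) (Kf h) = 2 * h x"
| "dF X (Kf h) (Pt x) = 2 * h x"
| "dF X (Kf h) (Kf k) = 2 * kd X h k"

definition PA :: "uspace \<Rightarrow> fp set" where
  "PA X = insert Star (Pt ` pts X \<union> Kf ` K X)"

definition DD :: "uspace \<Rightarrow> nat set" where
  "DD X = insert (TT X) ((\<lambda>a. 2*a) ` dists X \<union> (\<lambda>a. 2*a+1) ` dists X)"

lemma TT_gt: assumes "fin_ultra X" "a \<in> dists X" shows "2 * a + 1 < TT X"
proof -
  have "a \<le> Max (dists X)" using Max_ge[OF fuD(2)[OF assms(1)] assms(2)] .
  then show ?thesis unfolding TT_def by simp
qed

lemma max2: "max (2*b) (2*c) = 2 * max b c" for b c :: nat by (simp add: max_def)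

lemma KD5': assumes "h \<in> K X" "fin_ultra X" "x \<in> pts X" "y \<in> pts X" shows "h y \<le> max (h x) (dist X x y)"
  using KD(5)[OF assms(1) assms(4,3)] fuD(5)[OF assms(2) assms(3,4)] by simp

lemma kat_le': assumes "fin_ultra X" "h \<in> K X" "k \<in> K X" "x \<in> pts X" shows "k x \<le> max (h x) (kd X h k)"
  using kat_le[OF assms(1,3,2,4)] kd_sym[of X h k] by (simp add: max.commute)

lemma TT_ge2: "fin_ultra X \<Longrightarrow> a \<in> dists X \<Longrightarrow> 2 * a \<le> TT X"
  using TT_gt[of X a] by simp

lemma dF_le_T: assumes X: "fin_ultra X" and a: "a \<in> PA X" and b: "b \<in> PA X"
  shows "dF X a b \<le> TT X"
  using a b
  by (cases a; cases b) (auto simp: PA_def intro!: TT_ge2[OF X] intro: fuD(4)[OF X] KD(3) kd_D[OF X])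

lemma PA_cases: assumes "a \<in> PA X" "a \<noteq> Star"
  obtains x where "a = Pt x" "x \<in> pts X" | h where "a = Kf h" "h \<in> K X"
  using assms unfolding PA_def by blast

lemma dF_tri: assumes X: "fin_ultra X" and a: "a \<in> PA X" and b: "b \<in> PA X" and c: "c \<in> PA X"
  shows "dF X a c \<le> max (dF X a b) (dF X b c)"
proof -
  have T1: "dF X a b \<le> TT X" "dF X b c \<le> TT X" "dF X a c \<le> TT X" using dF_le_T assms by auto
  consider (S) "a = Star \<or> b = Star \<or> c = Star" | (N) "a \<noteq> Star" "b \<noteq> Star" "c \<noteq> Star" by blast
  then show ?thesis
  proof cases
    case S
    then show ?thesis using T1 by (cases a; cases b; cases c) (auto simp: le_max_iff_disj)
  next
    case N
    show ?thesis
    proof (cases rule: PA_cases[OF a N(1)])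
      case (1 x)
      show ?thesis
      proof (cases rule: PA_cases[OF b N(2)])
        case (1 y)
        show ?thesis
        proof (cases rule: PA_cases[OF c N(3)])
          case (1 z)
          then show ?thesis using fuD(7)[OF X, of x y z] \<open>a = Pt x\<close> \<open>x \<in> pts X\<close> \<open>b = Pt y\<close> \<open>y \<in> pts X\<close>
            by (simp add: max2)
        next
          case (2 h)
          then show ?thesis using KD(5)[of h X x y] \<open>a = Pt x\<close> \<open>x \<in> pts X\<close> \<open>b = Pt y\<close> \<open>y \<in> pts X\<close>
            by (simp add: max2 max.commute)
        qed
      next
        case (2 h)
        show ?thesis
        proof (cases rule: PA_cases[OF c N(3)])
          case (1 z)
          then show ?thesis using KD(6)[of h X x z] \<open>a = Pt x\<close> \<open>x \<in> pts X\<close> \<open>b = Kf h\<close> \<open>h \<in> K X\<close>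
            by (simp add: max2)
        next
          case (2 k)
          then show ?thesis using kat_le'[OF X, of h k x] \<open>a = Pt x\<close> \<open>x \<in> pts X\<close> \<open>b = Kf h\<close> \<open>h \<in> K X\<close>
            by (simp add: max2)
        qed
      qed
    next
      case (2 h)
      show ?thesis
      proof (cases rule: PA_cases[OF b N(2)])
        case (1 y)
        show ?thesis
        proof (cases rule: PA_cases[OF c N(3)])
          case (1 z)
          then show ?thesis using KD5'[of h X y z] X \<open>a = Kf h\<close> \<open>h \<in> K X\<close> \<open>b = Pt y\<close> \<open>y \<in> pts X\<close>
            by (simp add: max2)
        next
          case (2 k)
          then show ?thesis using kd_le[OF X, of h k y] \<open>a = Kf h\<close> \<open>h \<in> K X\<close> \<open>b = Pt y\<close> \<open>y \<in> pts X\<close>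
            by (simp add: max2)
        qed
      next
        case (2 k)
        show ?thesis
        proof (cases rule: PA_cases[OF c N(3)])
          case (1 z)
          then show ?thesis using kat_le[OF X, of h k z] \<open>a = Kf h\<close> \<open>h \<in> K X\<close> \<open>b = Kf k\<close> \<open>k \<in> K X\<close>
            by (simp add: max2)
        next
          case (2 l)
          then show ?thesis using kd_tri[OF X, of h k l] \<open>a = Kf h\<close> \<open>h \<in> K X\<close> \<open>b = Kf k\<close> \<open>k \<in> K X\<close>
            by (simp add: max2)
        qed
      qed
    qed
  qed
qed

lemma dF_sym: assumes X: "fin_ultra X" and a: "a \<in> PA X" and b: "b \<in> PA X" shows "dF X a b = dF X b a"
  using a b by (cases a; cases b) (auto simp: kd_sym PA_def fuD(5)[OF X])

lemma dF_zero: assumes X: "fin_ultra X" and a: "a \<in> PA X" and b: "b \<in> PA X" shows "dF X a b = 0 \<longleftrightarrow> a = b"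
  using a b by (cases a; cases b) (auto simp: PA_def fuD(6)[OF X] kd_zero[OF X] TT_def dest: KD(4))

lemma dF_in: assumes X: "fin_ultra X" and a: "a \<in> PA X" and b: "b \<in> PA X" shows "dF X a b \<in> DD X"
  using a b by (cases a; cases b) (auto simp: PA_def DD_def intro: fuD(4)[OF X] KD(3) kd_D[OF X] fuD(3)[OF X])


definition enc :: "uspace \<Rightarrow> fp \<Rightarrow> nat" where
  "enc X a = (case a of Star \<Rightarrow> 0 | Pt x \<Rightarrow> 2*x+1 | Kf h \<Rightarrow> 2 * to_nat (map h (sorted_list_of_set (pts X))) + 2)"

lemma enc_simps[simp]: "enc X Star = 0" "enc X (Pt x) = 2*x+1"
  "enc X (Kf h) = 2 * to_nat (map h (sorted_list_of_set (pts X))) + 2"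
  unfolding enc_def by simp_all

lemma KK: assumes X: "fin_ultra X" and h: "h \<in> K X" and k: "k \<in> K X" and
    eq: "map h (sorted_list_of_set (pts X)) = map k (sorted_list_of_set (pts X))" shows "h = k"
  proof (rule K_eqI[OF h k])
    fix x assume "x \<in> pts X"
    then have "x \<in> set (sorted_list_of_set (pts X))" using fuD(1)[OF X] by simp
    then show "h x = k x" using eq by (simp add: map_eq_conv)
  qed
lemma o1: "\<And>x n::nat. 2*x+1 \<noteq> 2*n+2" "\<And>x n::nat. 2*n+2 \<noteq> 2*x+1" by presburger+
lemma o2: "a \<in> PA X \<Longrightarrow> a = Star \<or> (\<exists>x. a = Pt x \<and> x \<in> pts X) \<or> (\<exists>h. a = Kf h \<and> h \<in> K X)"
    unfolding PA_def by blast

lemma enc_inj: assumes X: "fin_ultra X" shows "inj_on (enc X) (PA X)"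
proof (rule inj_onI)
  fix a b assume a: "a \<in> PA X" and b: "b \<in> PA X" and e: "enc X a = enc X b"
  show "a = b"
    using o2[OF a] o2[OF b]
  proof (elim disjE exE conjE)
    fix h k assume "a = Kf h" "h \<in> K X" "b = Kf k" "k \<in> K X"
    then show "a = b" using e KK[OF X] by simp
  qed (use e o1 in \<open>simp_all\<close>)
qed

definition dec :: "uspace \<Rightarrow> nat \<Rightarrow> fp" where
  "dec X = inv_into (PA X) (enc X)"

lemma dec_enc[simp]: assumes "fin_ultra X" "a \<in> PA X" shows "dec X (enc X a) = a"
  unfolding dec_def using inv_into_f_f[OF enc_inj[OF assms(1)] assms(2)] .

lemma PA_finite: assumes "fin_ultra X" shows "finite (PA X)"
  unfolding PA_def using fuD(1)[OF assms] K_finite[OF assms] by simp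

lemma DD_finite: assumes "fin_ultra X" shows "finite (DD X)"
  unfolding DD_def using fuD(2)[OF assms] by simp

definition FF :: "uspace \<Rightarrow> uspace" where
  "FF X = \<lparr>pts = enc X ` PA X, dists = DD X, dist = (\<lambda>u v. dF X (dec X u) (dec X v))\<rparr>"

lemma FF_simps[simp]: "pts (FF X) = enc X ` PA X" "dists (FF X) = DD X"
  "dist (FF X) u v = dF X (dec X u) (dec X v)"
  unfolding FF_def by simp_all

lemma FF_ultra: assumes X: "fin_ultra X" shows "fin_ultra (FF X)"
proof -
  have z: "0 \<in> DD X" using fuD(3)[OF X] unfolding DD_def by force
  have ie: "\<And>a b. a \<in> PA X \<Longrightarrow> b \<in> PA X \<Longrightarrow> enc X a = enc X b \<longleftrightarrow> a = b"
    using inj_on_eq_iff[OF enc_inj[OF X]] by blast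
  show ?thesis
    unfolding fin_ultra_def FF_simps
  proof (intro conjI ballI)
    show "finite (enc X ` PA X)" using PA_finite[OF X] by simp
    show "finite (DD X)" using DD_finite[OF X] .
    show "0 \<in> DD X" using z .
  next
    fix u v assume "u \<in> enc X ` PA X" "v \<in> enc X ` PA X"
    then obtain a b where ab: "a \<in> PA X" "b \<in> PA X" "u = enc X a" "v = enc X b" by blast
    show "dF X (dec X u) (dec X v) \<in> DD X" using ab dF_in[OF X] X by simp
    show "dF X (dec X u) (dec X v) = dF X (dec X v) (dec X u)" using ab dF_sym[OF X] X by simp
    show "dF X (dec X u) (dec X v) = 0 \<longleftrightarrow> u = v" using ab dF_zero[OF X] X ie by simp
  next
    fix u v w assume "u \<in> enc X ` PA X" "v \<in> enc X ` PA X" "w \<in> enc X ` PA X"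
    then obtain a b c where ab: "a \<in> PA X" "b \<in> PA X" "c \<in> PA X" "u = enc X a" "v = enc X b" "w = enc X c" by blast
    show "dF X (dec X u) (dec X w) \<le> max (dF X (dec X u) (dec X v)) (dF X (dec X v) (dec X w))"
      using ab dF_tri[OF X] X by simp
  qed
qed



lemma max_in: "a \<in> S \<Longrightarrow> b \<in> S \<Longrightarrow> max a b \<in> S"
  by (simp add: max_def)

definition kext :: "uspace \<Rightarrow> uspace \<Rightarrow> umor \<Rightarrow> (nat \<Rightarrow> nat) \<Rightarrow> (nat \<Rightarrow> nat)" where
  "kext X Y f h = (\<lambda>y. if y \<in> pts Y then Min ((\<lambda>x. max (snd f (h x)) (dist Y (fst f x) y)) ` pts X) else 0)"

lemma kext_le: assumes X: "fin_ultra X" and y: "y \<in> pts Y" and x: "x \<in> pts X"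
  shows "kext X Y f h y \<le> max (snd f (h x)) (dist Y (fst f x) y)"
  unfolding kext_def using y x fuD(1)[OF X] by (auto intro!: Min_le)

lemma kext_min: assumes X: "fin_ultra X" and h: "h \<in> K X" and y: "y \<in> pts Y"
  shows "\<exists>x\<in>pts X. kext X Y f h y = max (snd f (h x)) (dist Y (fst f x) y)"
proof -
  have "Min ((\<lambda>x. max (snd f (h x)) (dist Y (fst f x) y)) ` pts X) \<in> (\<lambda>x. max (snd f (h x)) (dist Y (fst f x) y)) ` pts X"
    using fuD(1)[OF X] KD(1)[OF h] by (intro Min_in) auto
  then show ?thesis using y unfolding kext_def by auto
qed

lemma kext_out: "y \<notin> pts Y \<Longrightarrow> kext X Y f h y = 0"
  unfolding kext_def by simp

lemma kext_f: assumes X: "fin_ultra X" and Y: "fin_ultra Y" and f: "dc_emb X Y f" and h: "h \<in> K X"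
  and x: "x \<in> pts X"
  shows "kext X Y f h (fst f x) = snd f (h x)"
proof (rule antisym)
  have fx: "fst f x \<in> pts Y" using dcD(1)[OF f x] .
  show "kext X Y f h (fst f x) \<le> snd f (h x)"
    using kext_le[OF X fx x, of f h] fu_self[OF Y fx] by simp
  obtain x' where x': "x' \<in> pts X" "kext X Y f h (fst f x) = max (snd f (h x')) (dist Y (fst f x') (fst f x))"
    using kext_min[OF X h fx] by blast
  have "h x \<le> max (h x') (dist X x' x)" using KD(5)[OF h x x'(1)] fuD(5)[OF X x x'(1)] by simp
  then have "snd f (h x) \<le> snd f (max (h x') (dist X x' x))"
    using dcD(4)[OF f KD(3)[OF h x] max_in[OF KD(3)[OF h x'(1)] fuD(4)[OF X x'(1) x]]] by simp
  also have "\<dots> = max (snd f (h x')) (dist Y (fst f x') (fst f x))"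
    using dc_max[OF f KD(3)[OF h x'(1)] fuD(4)[OF X x'(1) x]] dcD(6)[OF f x'(1) x] by simp
  finally show "snd f (h x) \<le> kext X Y f h (fst f x)" using x'(2) by simp
qed

lemma kext_K: assumes X: "fin_ultra X" and Y: "fin_ultra Y" and f: "dc_emb X Y f" and h: "h \<in> K X"
  shows "kext X Y f h \<in> K Y"
proof -
  let ?e = "kext X Y f h"
  obtain x0 where x0: "x0 \<in> pts X" using KD(1)[OF h] by blast
  have ne: "pts Y \<noteq> {}" using dcD(1)[OF f x0] by blast
  have vals: "?e y \<in> dists Y \<and> 0 < ?e y" if y: "y \<in> pts Y" for y
  proof -
    obtain x where x: "x \<in> pts X" "?e y = max (snd f (h x)) (dist Y (fst f x) y)"
      using kext_min[OF X h y] by blast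
    have "snd f (h x) \<in> dists Y" using dcD(3)[OF f KD(3)[OF h x(1)]] .
    moreover have "dist Y (fst f x) y \<in> dists Y" using fuD(4)[OF Y dcD(1)[OF f x(1)] y] .
    moreover have "0 < snd f (h x)" using dc_pos[OF f X KD(3)[OF h x(1)] KD(4)[OF h x(1)]] .
    ultimately show ?thesis using x(2) max_in by auto
  qed
  have k1: "?e y \<le> max (?e y') (dist Y y y')" if y: "y \<in> pts Y" and y': "y' \<in> pts Y" for y y'
  proof -
    obtain x where x: "x \<in> pts X" "?e y' = max (snd f (h x)) (dist Y (fst f x) y')"
      using kext_min[OF X h y'] by blast
    have fx: "fst f x \<in> pts Y" using dcD(1)[OF f x(1)] .
    have "?e y \<le> max (snd f (h x)) (dist Y (fst f x) y)" using kext_le[OF X y x(1)] .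
    moreover have "dist Y (fst f x) y \<le> max (dist Y (fst f x) y') (dist Y y' y)" using fuD(7)[OF Y fx y' y] .
    moreover have "dist Y y' y = dist Y y y'" using fuD(5)[OF Y y' y] .
    ultimately show ?thesis using x(2) by (simp add: max_def split: if_splits)
  qed
  have k2: "dist Y y y' \<le> max (?e y) (?e y')" if y: "y \<in> pts Y" and y': "y' \<in> pts Y" for y y'
  proof -
    obtain x where x: "x \<in> pts X" "?e y = max (snd f (h x)) (dist Y (fst f x) y)"
      using kext_min[OF X h y] by blast
    obtain x' where x': "x' \<in> pts X" "?e y' = max (snd f (h x')) (dist Y (fst f x') y')"
      using kext_min[OF X h y'] by blast
    have fx: "fst f x \<in> pts Y" using dcD(1)[OF f x(1)] .
    have fx': "fst f x' \<in> pts Y" using dcD(1)[OF f x'(1)] .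
    have "dist Y y y' \<le> max (dist Y y (fst f x)) (dist Y (fst f x) y')" using fuD(7)[OF Y y fx y'] .
    moreover have "dist Y (fst f x) y' \<le> max (dist Y (fst f x) (fst f x')) (dist Y (fst f x') y')"
      using fuD(7)[OF Y fx fx' y'] .
    moreover have "dist Y y (fst f x) = dist Y (fst f x) y" using fuD(5)[OF Y y fx] .
    moreover have "dist Y (fst f x) (fst f x') \<le> max (snd f (h x)) (snd f (h x'))"
    proof -
      have "dist X x x' \<le> max (h x) (h x')" using KD(6)[OF h x(1) x'(1)] .
      then have "snd f (dist X x x') \<le> snd f (max (h x) (h x'))"
        using dcD(4)[OF f fuD(4)[OF X x(1) x'(1)] max_in[OF KD(3)[OF h x(1)] KD(3)[OF h x'(1)]]] by simp
      then show ?thesis using dc_max[OF f KD(3)[OF h x(1)] KD(3)[OF h x'(1)]] dcD(6)[OF f x(1) x'(1)] by simp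
    qed
    ultimately show ?thesis using x(2) x'(2) by (simp add: max_def split: if_splits)
  qed
  show ?thesis unfolding K_def using ne vals k1 k2 kext_out by blast
qed


lemma K_neq: assumes "h \<in> K X" "k \<in> K X" "h \<noteq> k" obtains x where "x \<in> pts X" "h x \<noteq> k x"
  using K_eqI[OF assms(1,2)] assms(3) by blast

lemma kd_kext: assumes X: "fin_ultra X" and Y: "fin_ultra Y" and f: "dc_emb X Y f" and h: "h \<in> K X" and k: "k \<in> K X"
  shows "kd Y (kext X Y f h) (kext X Y f k) = snd f (kd X h k)"
proof (cases "h = k")
  case True then show ?thesis using dcD(5)[OF f] by (simp add: kd_def)
next
  case False
  then obtain x where x: "x \<in> pts X" "h x \<noteq> k x" using K_neq[OF h k] by blast
  have fx: "fst f x \<in> pts Y" using dcD(1)[OF f x(1)] .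
  have e1: "kext X Y f h (fst f x) = snd f (h x)" using kext_f[OF X Y f h x(1)] .
  have e2: "kext X Y f k (fst f x) = snd f (k x)" using kext_f[OF X Y f k x(1)] .
  have ne: "snd f (h x) \<noteq> snd f (k x)" using dc_eq[OF f KD(3)[OF h x(1)] KD(3)[OF k x(1)]] x(2) by simp
  have "kd Y (kext X Y f h) (kext X Y f k) = max (snd f (h x)) (snd f (k x))"
    using kd_witness[OF Y kext_K[OF X Y f h] kext_K[OF X Y f k] fx] e1 e2 ne by simp
  also have "\<dots> = snd f (max (h x) (k x))" using dc_max[OF f KD(3)[OF h x(1)] KD(3)[OF k x(1)]] by simp
  also have "max (h x) (k x) = kd X h k" using kd_witness[OF X h k x] by simp
  finally show ?thesis .
qed

lemma mcomp_simps[simp]: "fst (mcomp g f) = fst g \<circ> fst f" "snd (mcomp g f) = snd g \<circ> snd f"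
  unfolding mcomp_def by simp_all

lemma mid_simps[simp]: "fst mid = id" "snd mid = id"
  unfolding mid_def by simp_all

lemma mid_dc: "fin_ultra X \<Longrightarrow> dc_emb X X mid"
  unfolding dc_emb_def by simp

lemma kext_comp: assumes X: "fin_ultra X" and Y: "fin_ultra Y" and Z: "fin_ultra Z"
  and f: "dc_emb X Y f" and g: "dc_emb Y Z g" and h: "h \<in> K X"
  shows "kext X Z (mcomp g f) h = kext Y Z g (kext X Y f h)"
proof (rule ext)
  fix z
  let ?e = "kext X Y f h"
  have eK: "?e \<in> K Y" using kext_K[OF X Y f h] .
  show "kext X Z (mcomp g f) h z = kext Y Z g ?e z"
  proof (cases "z \<in> pts Z")
    case False then show ?thesis by (simp add: kext_out)
  next
    case z: True
    show ?thesis
    proof (rule antisym)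
      obtain y where y: "y \<in> pts Y" "kext Y Z g ?e z = max (snd g (?e y)) (dist Z (fst g y) z)"
        using kext_min[OF Y eK z] by blast
      obtain x where x: "x \<in> pts X" "?e y = max (snd f (h x)) (dist Y (fst f x) y)"
        using kext_min[OF X h y(1)] by blast
      have fx: "fst f x \<in> pts Y" using dcD(1)[OF f x(1)] .
      have gy: "fst g y \<in> pts Z" using dcD(1)[OF g y(1)] .
      have gfx: "fst g (fst f x) \<in> pts Z" using dcD(1)[OF g fx] .
      have "snd g (?e y) = max (snd g (snd f (h x))) (dist Z (fst g (fst f x)) (fst g y))"
        using x(2) dc_max[OF g dcD(3)[OF f KD(3)[OF h x(1)]] fuD(4)[OF Y fx y(1)]] dcD(6)[OF g fx y(1)] by simp
      moreover have "kext X Z (mcomp g f) h z \<le> max (snd g (snd f (h x))) (dist Z (fst g (fst f x)) z)"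
        using kext_le[OF X z x(1), of "mcomp g f" h] by simp
      moreover have "dist Z (fst g (fst f x)) z \<le> max (dist Z (fst g (fst f x)) (fst g y)) (dist Z (fst g y) z)"
        using fuD(7)[OF Z gfx gy z] .
      ultimately show "kext X Z (mcomp g f) h z \<le> kext Y Z g ?e z"
        using y(2) by (simp add: max_def split: if_splits)
    next
      obtain x where x: "x \<in> pts X" "kext X Z (mcomp g f) h z = max (snd g (snd f (h x))) (dist Z (fst g (fst f x)) z)"
        using kext_min[OF X h z, of "mcomp g f"] by auto
      have fx: "fst f x \<in> pts Y" using dcD(1)[OF f x(1)] .
      have "kext Y Z g ?e z \<le> max (snd g (?e (fst f x))) (dist Z (fst g (fst f x)) z)"
        using kext_le[OF Y z fx] .
      then show "kext Y Z g ?e z \<le> kext X Z (mcomp g f) h z"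
        using x(2) kext_f[OF X Y f h x(1)] by simp
    qed
  qed
qed

lemma kext_id: assumes X: "fin_ultra X" and h: "h \<in> K X"
  shows "kext X X mid h = h"
proof (rule ext)
  fix y show "kext X X mid h y = h y"
  proof (cases "y \<in> pts X")
    case True then show ?thesis using kext_f[OF X X mid_dc[OF X] h True] by simp
  next
    case False then show ?thesis using kext_out KD(2)[OF h] by simp
  qed
qed



definition mapA :: "uspace \<Rightarrow> uspace \<Rightarrow> umor \<Rightarrow> fp \<Rightarrow> fp" where
  "mapA X Y f a = (case a of Star \<Rightarrow> Star | Pt x \<Rightarrow> Pt (fst f x) | Kf h \<Rightarrow> Kf (kext X Y f h))"

lemma mapA_simps[simp]: "mapA X Y f Star = Star" "mapA X Y f (Pt x) = Pt (fst f x)"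
  "mapA X Y f (Kf h) = Kf (kext X Y f h)"
  unfolding mapA_def by simp_all

definition sig :: "uspace \<Rightarrow> uspace \<Rightarrow> umor \<Rightarrow> nat \<Rightarrow> nat" where
  "sig X Y f n = (if n = TT X then TT Y else 2 * snd f (n div 2) + n mod 2)"

lemma TT_ge: "TT X \<ge> 2" unfolding TT_def by simp

lemma sig_TT[simp]: "sig X Y f (TT X) = TT Y" unfolding sig_def by simp

lemma sig_lin: assumes X: "fin_ultra X" and a: "a \<in> dists X" and r: "r < 2"
  shows "sig X Y f (2*a + r) = 2 * snd f a + r"
proof -
  have "2*a + r \<noteq> TT X" using TT_gt[OF X a] r by simp
  then show ?thesis unfolding sig_def using r by simp
qed

lemma sig_2: assumes X: "fin_ultra X" and a: "a \<in> dists X" shows "sig X Y f (2*a) = 2 * snd f a"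
  using sig_lin[OF X a, of 0] by simp

lemma DD_cases: assumes "n \<in> DD X"
  obtains "n = TT X" | a r where "a \<in> dists X" "r < 2" "n = 2*a + r"
proof -
  from assms consider "n = TT X" | a where "a \<in> dists X" "n = 2*a" | a where "a \<in> dists X" "n = 2*a+1"
    unfolding DD_def by blast
  then show thesis
  proof cases
    case 1 then show ?thesis using that(1) by simp
  next
    case (2 a) then show ?thesis using that(2)[of a 0] by simp
  next
    case (3 a) then show ?thesis using that(2)[of a 1] by simp
  qed
qed

lemma mapA_PA: assumes X: "fin_ultra X" and Y: "fin_ultra Y" and f: "dc_emb X Y f" and a: "a \<in> PA X"
  shows "mapA X Y f a \<in> PA Y"
  using a dcD(1)[OF f] kext_K[OF X Y f] unfolding PA_def by auto

lemma mapA_dF: assumes X: "fin_ultra X" and Y: "fin_ultra Y" and f: "dc_emb X Y f"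
  and a: "a \<in> PA X" and b: "b \<in> PA X"
  shows "dF Y (mapA X Y f a) (mapA X Y f b) = sig X Y f (dF X a b)"
proof -
  have s0: "sig X Y f 0 = 0" using sig_2[OF X fuD(3)[OF X], of Y f] dcD(5)[OF f] by simp
  show ?thesis
    using a b
    by (cases a; cases b)
       (auto simp: PA_def s0 sig_2[OF X] dcD(6)[OF f] fuD(4)[OF X] kext_f[OF X Y f] KD(3) kd_kext[OF X Y f] kd_D[OF X])
qed

lemma mapA_inj: assumes X: "fin_ultra X" and Y: "fin_ultra Y" and f: "dc_emb X Y f"
  shows "inj_on (mapA X Y f) (PA X)"
proof (rule inj_onI)
  fix a b assume a: "a \<in> PA X" and b: "b \<in> PA X" and e: "mapA X Y f a = mapA X Y f b"
  have "dF Y (mapA X Y f a) (mapA X Y f b) = 0" using e dF_zero[OF Y mapA_PA[OF X Y f a] mapA_PA[OF X Y f b]] by simp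
  then have S: "sig X Y f (dF X a b) = 0" using mapA_dF[OF X Y f a b] by simp
  have D: "dF X a b \<in> DD X" using dF_in[OF X a b] .
  from D have "dF X a b = 0"
  proof (cases rule: DD_cases)
    case 1 then show ?thesis using \<open>sig X Y f (dF X a b) = 0\<close> TT_ge[of Y] by simp
  next
    case (2 c r)
    then have "2 * snd f c + r = 0" using \<open>sig X Y f (dF X a b) = 0\<close> sig_lin[OF X 2(1,2)] by simp
    then have "snd f c = snd f 0" "r = 0" using dcD(5)[OF f] by simp_all
    then have "c = 0" using dc_eq[OF f 2(1) fuD(3)[OF X]] by simp
    then show ?thesis using 2 \<open>r = 0\<close> by simp
  qed
  then show "a = b" using dF_zero[OF X a b] by simp
qed

lemma lex2: "r < 2 \<Longrightarrow> r' < 2 \<Longrightarrow> (2*p + r \<le> 2*q + r') \<longleftrightarrow> (p < q \<or> (p = q \<and> r \<le> r'))" for p q r r' :: nat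
  by presburger

lemma sig_mono: assumes X: "fin_ultra X" and Y: "fin_ultra Y" and f: "dc_emb X Y f"
  and n: "n \<in> DD X" and m: "m \<in> DD X"
  shows "sig X Y f n \<le> sig X Y f m \<longleftrightarrow> n \<le> m"
proof (cases rule: DD_cases[OF n])
  case 1
  then show ?thesis
  proof (cases rule: DD_cases[OF m])
    case (2 b r')
    then show ?thesis using 1 sig_lin[OF X 2(1,2)] TT_gt[OF X 2(1)] TT_gt[OF Y dcD(3)[OF f 2(1)]] by simp
  qed simp
next
  case (2 a r)
  then show ?thesis
  proof (cases rule: DD_cases[OF m])
    case 1
    then show ?thesis using 2 sig_lin[OF X 2(1,2)] TT_gt[OF X 2(1)] TT_gt[OF Y dcD(3)[OF f 2(1)]] by simp
  next
    case (2 b r')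
    then show ?thesis
      using \<open>a \<in> dists X\<close> \<open>r < 2\<close> \<open>n = 2*a + r\<close> sig_lin[OF X, of a r Y f] sig_lin[OF X, of b r' Y f]
        lex2 dc_less[OF f \<open>a \<in> dists X\<close> \<open>b \<in> dists X\<close>] dc_eq[OF f \<open>a \<in> dists X\<close> \<open>b \<in> dists X\<close>]
      by simp
  qed
qed

lemma sig_DD: assumes X: "fin_ultra X" and f: "dc_emb X Y f" and n: "n \<in> DD X"
  shows "sig X Y f n \<in> DD Y"
proof (cases rule: DD_cases[OF n])
  case 1 then show ?thesis unfolding DD_def by simp
next
  case (2 a r)
  then have "r = 0 \<or> r = 1" by auto
  then show ?thesis using 2 sig_lin[OF X 2(1,2)] dcD(3)[OF f 2(1)] unfolding DD_def by auto
qed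

definition FFm :: "uspace \<Rightarrow> uspace \<Rightarrow> umor \<Rightarrow> umor" where
  "FFm X Y f = (\<lambda>n. enc Y (mapA X Y f (dec X n)), sig X Y f)"

definition eta :: "uspace \<Rightarrow> umor" where
  "eta X = (\<lambda>x. enc X (Pt x), \<lambda>a. 2*a)"

lemma FFm_dc: assumes X: "fin_ultra X" and Y: "fin_ultra Y" and f: "dc_emb X Y f"
  shows "dc_emb (FF X) (FF Y) (FFm X Y f)"
  unfolding dc_emb_def FF_simps FFm_def fst_conv snd_conv
proof (intro conjI ballI)
  show "(\<lambda>n. enc Y (mapA X Y f (dec X n))) ` enc X ` PA X \<subseteq> enc Y ` PA Y"
    using mapA_PA[OF X Y f] X by auto
  show "inj_on (\<lambda>n. enc Y (mapA X Y f (dec X n))) (enc X ` PA X)"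
  proof (rule inj_onI)
    fix u v assume "u \<in> enc X ` PA X" "v \<in> enc X ` PA X" and e: "enc Y (mapA X Y f (dec X u)) = enc Y (mapA X Y f (dec X v))"
    then obtain a b where ab: "a \<in> PA X" "b \<in> PA X" "u = enc X a" "v = enc X b" by blast
    then have "mapA X Y f a = mapA X Y f b"
      using e inj_on_eq_iff[OF enc_inj[OF Y] mapA_PA[OF X Y f ab(1)] mapA_PA[OF X Y f ab(2)]] X by simp
    then have "a = b" using inj_on_eq_iff[OF mapA_inj[OF X Y f] ab(1,2)] by simp
    then show "u = v" using ab by simp
  qed
  show "sig X Y f ` DD X \<subseteq> DD Y" using sig_DD[OF X f] by blast
  show "sig X Y f 0 = 0" using sig_2[OF X fuD(3)[OF X], of Y f] dcD(5)[OF f] by simp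
next
  fix a b assume "a \<in> DD X" "b \<in> DD X"
  then show "(a \<le> b) = (sig X Y f a \<le> sig X Y f b)" using sig_mono[OF X Y f] by simp
next
  fix u v assume "u \<in> enc X ` PA X" "v \<in> enc X ` PA X"
  then obtain a b where ab: "a \<in> PA X" "b \<in> PA X" "u = enc X a" "v = enc X b" by blast
  then show "dF Y (dec Y (enc Y (mapA X Y f (dec X u)))) (dec Y (enc Y (mapA X Y f (dec X v)))) =
         sig X Y f (dF X (dec X u) (dec X v))"
    using mapA_dF[OF X Y f ab(1,2)] mapA_PA[OF X Y f] X Y by simp
qed



lemma eta_dc: assumes X: "fin_ultra X" shows "dc_emb X (FF X) (eta X)"
  unfolding dc_emb_def FF_simps eta_def fst_conv snd_conv
proof (intro conjI ballI)
  show "(\<lambda>x. enc X (Pt x)) ` pts X \<subseteq> enc X ` PA X"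
  proof (rule image_subsetI)
    fix x assume "x \<in> pts X" then have "Pt x \<in> PA X" unfolding PA_def by simp
    then show "enc X (Pt x) \<in> enc X ` PA X" by (rule imageI)
  qed
  show "inj_on (\<lambda>x. enc X (Pt x)) (pts X)" by (auto simp: inj_on_def)
  show "(\<lambda>a. 2 * a) ` dists X \<subseteq> DD X" unfolding DD_def by auto
  fix x x' assume "x \<in> pts X" "x' \<in> pts X"
  then have "Pt x \<in> PA X" "Pt x' \<in> PA X" unfolding PA_def by simp_all
  then show "dF X (dec X (enc X (Pt x))) (dec X (enc X (Pt x'))) = 2 * dist X x x'"
    using dec_enc[OF X] by (simp del: enc_simps)
qed auto

lemma kext_cong: assumes X: "fin_ultra X" and h: "h \<in> K X" and m: "meq X f f'"
  shows "kext X Y f h = kext X Y f' h"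
proof -
  have "\<And>x. x \<in> pts X \<Longrightarrow> fst f x = fst f' x" "\<And>x. x \<in> pts X \<Longrightarrow> snd f (h x) = snd f' (h x)"
    using m KD(3)[OF h] unfolding meq_def by auto
  then have eq: "\<And>y. (\<lambda>x. max (snd f (h x)) (dist Y (fst f x) y)) ` pts X = (\<lambda>x. max (snd f' (h x)) (dist Y (fst f' x) y)) ` pts X"
    by (intro image_cong) auto
  show ?thesis unfolding kext_def by (rule ext) (simp only: eq)
qed

lemma sig_cong: assumes X: "fin_ultra X" and m: "meq X f f'" and n: "n \<in> DD X"
  shows "sig X Y f n = sig X Y f' n"
proof (cases rule: DD_cases[OF n])
  case (2 a r)
  then show ?thesis using sig_lin[OF X 2(1,2)] m unfolding meq_def by simp
qed simp

lemma FFm_cong: assumes X: "fin_ultra X" and m: "meq X f f'"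
  shows "meq (FF X) (FFm X Y f) (FFm X Y f')"
  unfolding meq_def FF_simps FFm_def fst_conv snd_conv
proof (intro conjI ballI)
  fix u assume "u \<in> enc X ` PA X"
  then obtain a where a: "a \<in> PA X" "u = enc X a" by blast
  have "mapA X Y f a = mapA X Y f' a"
    using a(1) m kext_cong[OF X _ m] unfolding PA_def meq_def by auto
  then show "enc Y (mapA X Y f (dec X u)) = enc Y (mapA X Y f' (dec X u))" using a X by simp
next
  fix n assume "n \<in> DD X" then show "sig X Y f n = sig X Y f' n" using sig_cong[OF X m] by simp
qed

lemma FFm_id: assumes X: "fin_ultra X" shows "meq (FF X) (FFm X X mid) mid"
  unfolding meq_def FF_simps FFm_def fst_conv snd_conv
proof (intro conjI ballI)
  fix u assume "u \<in> enc X ` PA X"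
  then obtain a where a: "a \<in> PA X" "u = enc X a" by blast
  have "mapA X X mid a = a" using a(1) kext_id[OF X] unfolding PA_def by auto
  then show "enc X (mapA X X mid (dec X u)) = fst mid u" using a X by simp
next
  fix n assume "n \<in> DD X"
  then show "sig X X mid n = snd mid n"
  proof (cases rule: DD_cases)
    case (2 a r) then show ?thesis using sig_lin[OF X 2(1,2)] by simp
  qed simp
qed

lemma FFm_comp: assumes X: "fin_ultra X" and Y: "fin_ultra Y" and Z: "fin_ultra Z"
  and f: "dc_emb X Y f" and g: "dc_emb Y Z g"
  shows "meq (FF X) (FFm X Z (mcomp g f)) (mcomp (FFm Y Z g) (FFm X Y f))"
  unfolding meq_def FF_simps
proof (intro conjI ballI)
  fix u assume "u \<in> enc X ` PA X"
  then obtain a where a: "a \<in> PA X" "u = enc X a" by blast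
  have "mapA X Z (mcomp g f) a = mapA Y Z g (mapA X Y f a)"
    using a(1) kext_comp[OF X Y Z f g] unfolding PA_def by auto
  then show "fst (FFm X Z (mcomp g f)) u = fst (mcomp (FFm Y Z g) (FFm X Y f)) u"
    using a X Y mapA_PA[OF X Y f a(1)] unfolding FFm_def by simp
next
  fix n assume "n \<in> DD X"
  then show "snd (FFm X Z (mcomp g f)) n = snd (mcomp (FFm Y Z g) (FFm X Y f)) n"
  proof (cases rule: DD_cases)
    case 1 then show ?thesis unfolding FFm_def by simp
  next
    case (2 a r)
    have fa: "snd f a \<in> dists Y" using dcD(3)[OF f 2(1)] .
    show ?thesis using 2 sig_lin[OF X 2(1,2)] sig_lin[OF Y fa 2(2)] unfolding FFm_def by simp
  qed
qed

lemma nat_eta: assumes X: "fin_ultra X" and Y: "fin_ultra Y" and f: "dc_emb X Y f"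
  shows "meq X (mcomp (FFm X Y f) (eta X)) (mcomp (eta Y) f)"
  unfolding meq_def
proof (intro conjI ballI)
  fix x assume x: "x \<in> pts X"
  then have "Pt x \<in> PA X" unfolding PA_def by simp
  then show "fst (mcomp (FFm X Y f) (eta X)) x = fst (mcomp (eta Y) f) x"
    using X dec_enc[OF X \<open>Pt x \<in> PA X\<close>] unfolding FFm_def eta_def by (simp del: enc_simps)
next
  fix a assume a: "a \<in> dists X"
  then show "snd (mcomp (FFm X Y f) (eta X)) a = snd (mcomp (eta Y) f) a"
    using sig_2[OF X a] unfolding FFm_def eta_def by simp
qed



lemma PA_Pt: "x \<in> pts X \<Longrightarrow> Pt x \<in> PA X" unfolding PA_def by simp
lemma PA_Kf: "h \<in> K X \<Longrightarrow> Kf h \<in> PA X" unfolding PA_def by simp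
lemma PA_Star: "Star \<in> PA X" unfolding PA_def by simp

lemma kat_A: assumes X: "fin_ultra X" and Y: "fin_ultra Y" and f: "dc_emb X Y f"
  and P: "fst f ` pts X = pts Y" and C: "card (dists Y - snd f ` dists X) = 1"
  shows "\<exists>g. dc_emb Y (FF X) g \<and> meq X (mcomp g f) (eta X)"
proof -
  obtain new where new: "dists Y - snd f ` dists X = {new}" using C by (rule card_1_singletonE)
  have newY: "new \<in> dists Y" and newn: "new \<notin> snd f ` dists X" using new by auto
  have DY: "dists Y = snd f ` dists X \<union> {new}" using new dcD(3)[OF f] by auto
  have z0: "0 \<in> dists X" using fuD(3)[OF X] .
  have f0: "snd f 0 = 0" using dcD(5)[OF f] .
  have new0: "0 < new" using newn z0 f0 by (metis image_eqI not_gr0)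
  define S where "S = {a \<in> dists X. snd f a < new}"
  have Sfin: "finite S" unfolding S_def using fuD(2)[OF X] by simp
  have S0: "0 \<in> S" unfolding S_def using z0 f0 new0 by simp
  define a0 where "a0 = Max S"
  have a0S: "a0 \<in> S" unfolding a0_def using Sfin S0 Max_in by blast
  have a0X: "a0 \<in> dists X" using a0S unfolding S_def by simp
  have key: "snd f c < new \<longleftrightarrow> c \<le> a0" if c: "c \<in> dists X" for c
  proof
    assume "snd f c < new" then have "c \<in> S" unfolding S_def using c by simp
    then show "c \<le> a0" unfolding a0_def using Sfin Max_ge by blast
  next
    assume "c \<le> a0" then have "snd f c \<le> snd f a0" using dcD(4)[OF f c a0X] by simp
    then show "snd f c < new" using a0S unfolding S_def by simp
  qed
  have neq: "snd f c \<noteq> new" if "c \<in> dists X" for c using newn that by blast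
  define Di where "Di = inv_into (dists X) (snd f)"
  have Di: "Di (snd f a) = a" if "a \<in> dists X" for a
    unfolding Di_def using inv_into_f_f[OF dc_inj[OF f] that] .
  define gi where "gi = inv_into (pts X) (fst f)"
  have gi: "gi (fst f x) = x" if "x \<in> pts X" for x
    unfolding gi_def using inv_into_f_f[OF dcD(2)[OF f] that] .
  define g :: umor where "g = (\<lambda>y. enc X (Pt (gi y)), \<lambda>d. if d \<in> snd f ` dists X then 2 * Di d else 2*a0+1)"
  have g1: "fst g (fst f x) = enc X (Pt x)" if "x \<in> pts X" for x using gi[OF that] unfolding g_def by simp
  have g2: "snd g (snd f a) = 2 * a" if "a \<in> dists X" for a using Di[OF that] that unfolding g_def by simp
  have g3: "snd g new = 2*a0+1" using newn unfolding g_def by simp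
  have dY: "d \<in> dists Y \<Longrightarrow> (\<exists>a\<in>dists X. d = snd f a) \<or> d = new" for d using DY by blast
  have pY: "y \<in> pts Y \<Longrightarrow> \<exists>x\<in>pts X. y = fst f x" for y using P by blast
  have "dc_emb Y (FF X) g"
    unfolding dc_emb_def FF_simps
  proof (intro conjI ballI)
    show "fst g ` pts Y \<subseteq> enc X ` PA X"
    proof (rule image_subsetI)
      fix y assume "y \<in> pts Y"
      then obtain x where "x \<in> pts X" "y = fst f x" using pY by blast
      then show "fst g y \<in> enc X ` PA X" using g1 PA_Pt by blast
    qed
    show "inj_on (fst g) (pts Y)"
    proof (rule inj_onI)
      fix y1 y2 assume "y1 \<in> pts Y" "y2 \<in> pts Y" "fst g y1 = fst g y2"
      then obtain x1 x2 where "x1 \<in> pts X" "y1 = fst f x1" "x2 \<in> pts X" "y2 = fst f x2" "fst g y1 = fst g y2"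
        using pY by blast
      then show "y1 = y2" using g1 by simp
    qed
    show "snd g ` dists Y \<subseteq> DD X"
    proof (rule image_subsetI)
      fix d assume "d \<in> dists Y"
      then consider a where "a \<in> dists X" "d = snd f a" | "d = new" using dY by blast
      then show "snd g d \<in> DD X"
        by cases (use g2 g3 a0X in \<open>auto simp: DD_def\<close>)
    qed
    show "snd g 0 = 0" using g2[OF z0] f0 by simp
  next
    fix d1 d2 assume d1: "d1 \<in> dists Y" and d2: "d2 \<in> dists Y"
    from dY[OF d1] dY[OF d2]
    show "(d1 \<le> d2) = (snd g d1 \<le> snd g d2)"
    proof (elim disjE bexE)
      fix a b assume a: "a \<in> dists X" "d1 = snd f a" and b: "b \<in> dists X" "d2 = snd f b"
      then show ?thesis using g2 dcD(4)[OF f a(1) b(1)] by simp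
    next
      fix a assume a: "a \<in> dists X" "d1 = snd f a" and "d2 = new"
      then show ?thesis using g2[OF a(1)] g3 key[OF a(1)] neq[OF a(1)] by auto
    next
      fix b assume "d1 = new" and b: "b \<in> dists X" "d2 = snd f b"
      then show ?thesis using g2[OF b(1)] g3 key[OF b(1)] neq[OF b(1)] by auto
    next
      assume "d1 = new" "d2 = new" then show ?thesis by simp
    qed
  next
    fix y1 y2 assume "y1 \<in> pts Y" "y2 \<in> pts Y"
    then obtain x1 x2 where x: "x1 \<in> pts X" "y1 = fst f x1" "x2 \<in> pts X" "y2 = fst f x2"
      using pY by blast
    then show "dF X (dec X (fst g y1)) (dec X (fst g y2)) = snd g (dist Y y1 y2)"
      using g1 g2 dcD(6)[OF f x(1,3)] fuD(4)[OF X x(1,3)] dec_enc[OF X PA_Pt[OF x(1)]] dec_enc[OF X PA_Pt[OF x(3)]]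
      by (simp del: enc_simps)
  qed
  moreover have "meq X (mcomp g f) (eta X)"
    unfolding meq_def eta_def using g1 g2 by simp
  ultimately show ?thesis by blast
qed


lemma kat_B: assumes X: "fin_ultra X" and Y: "fin_ultra Y" and f: "dc_emb X Y f"
  and C: "card (pts Y - fst f ` pts X) = 1" and D: "snd f ` dists X = dists Y"
  shows "\<exists>g. dc_emb Y (FF X) g \<and> meq X (mcomp g f) (eta X)"
proof -
  obtain p where p: "pts Y - fst f ` pts X = {p}" using C by (rule card_1_singletonE)
  have pY: "p \<in> pts Y" and pn: "p \<notin> fst f ` pts X" using p by auto
  have PY: "y \<in> pts Y \<Longrightarrow> y = p \<or> (\<exists>x\<in>pts X. y = fst f x)" for y using p by blast
  have z0: "0 \<in> dists X" using fuD(3)[OF X] .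
  have f0: "snd f 0 = 0" using dcD(5)[OF f] .
  define Di where "Di = inv_into (dists X) (snd f)"
  have Di: "Di (snd f a) = a" if "a \<in> dists X" for a
    unfolding Di_def using inv_into_f_f[OF dc_inj[OF f] that] .
  have Di2: "Di d \<in> dists X" "snd f (Di d) = d" if "d \<in> dists Y" for d
    unfolding Di_def using D that by (auto intro: inv_into_into f_inv_into_f)
  define gi where "gi = inv_into (pts X) (fst f)"
  have gi: "gi (fst f x) = x" if "x \<in> pts X" for x
    unfolding gi_def using inv_into_f_f[OF dcD(2)[OF f] that] .
  define h where "h = (\<lambda>x. if x \<in> pts X then Di (dist Y p (fst f x)) else 0)"
  have fx: "fst f x \<in> pts Y" if "x \<in> pts X" for x using dcD(1)[OF f that] .
  have hD: "h x \<in> dists X" "snd f (h x) = dist Y p (fst f x)" if x: "x \<in> pts X" for x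
    using Di2[OF fuD(4)[OF Y pY fx[OF x]]] x unfolding h_def by simp_all
  have hK: "h \<in> K X" if ne: "pts X \<noteq> {}"
    unfolding K_def mem_Collect_eq
  proof (intro conjI ballI allI impI)
    show "pts X \<noteq> {}" using ne .
    fix x assume "x \<notin> pts X" then show "h x = 0" unfolding h_def by simp
  next
    fix x assume x: "x \<in> pts X"
    show "h x \<in> dists X" using hD[OF x] by simp
    show "0 < h x"
    proof (rule ccontr)
      assume "\<not> 0 < h x" then have "h x = 0" by simp
      then have "dist Y p (fst f x) = 0" using hD(2)[OF x] f0 by simp
      then have "p = fst f x" using fuD(6)[OF Y pY fx[OF x]] by simp
      then show False using pn x by blast
    qed
  next
    fix x y assume x: "x \<in> pts X" and y: "y \<in> pts X"
    have mx: "max (h y) (dist X x y) \<in> dists X" using max_in hD(1)[OF y] fuD(4)[OF X x y] by blast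
    have "dist Y p (fst f x) \<le> max (dist Y p (fst f y)) (dist Y (fst f y) (fst f x))"
      using fuD(7)[OF Y pY fx[OF y] fx[OF x]] .
    also have "dist Y (fst f y) (fst f x) = snd f (dist X x y)"
      using dcD(6)[OF f y x] fuD(5)[OF X y x] by simp
    finally have "snd f (h x) \<le> snd f (max (h y) (dist X x y))"
      using hD(2)[OF x] hD(2)[OF y] dc_max[OF f hD(1)[OF y] fuD(4)[OF X x y]] by simp
    then show "h x \<le> max (h y) (dist X x y)" using dcD(4)[OF f hD(1)[OF x] mx] by simp
    have mx2: "max (h x) (h y) \<in> dists X" using max_in hD(1)[OF x] hD(1)[OF y] by blast
    have "dist Y (fst f x) (fst f y) \<le> max (dist Y (fst f x) p) (dist Y p (fst f y))"
      using fuD(7)[OF Y fx[OF x] pY fx[OF y]] .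
    then have "snd f (dist X x y) \<le> snd f (max (h x) (h y))"
      using hD(2)[OF x] hD(2)[OF y] dc_max[OF f hD(1)[OF x] hD(1)[OF y]] dcD(6)[OF f x y]
        fuD(5)[OF Y pY fx[OF x]] by simp
    then show "dist X x y \<le> max (h x) (h y)" using dcD(4)[OF f fuD(4)[OF X x y] mx2] by simp
  qed
  define q where "q = (\<lambda>y. if y = p then (if pts X = {} then Star else Kf h) else Pt (gi y))"
  have qf: "q (fst f x) = Pt x" if "x \<in> pts X" for x using gi[OF that] pn that unfolding q_def by auto
  have qPA: "q y \<in> PA X" if "y \<in> pts Y" for y
  proof -
    from PY[OF that] show ?thesis
    proof
      assume "y = p" then show ?thesis using PA_Star PA_Kf hK unfolding q_def by auto
    next
      assume "\<exists>x\<in>pts X. y = fst f x"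
      then obtain x where "x \<in> pts X" "y = fst f x" by blast
      then show ?thesis using qf PA_Pt by simp
    qed
  qed
  define g :: umor where "g = (\<lambda>y. enc X (q y), \<lambda>d. 2 * Di d)"
  have "dc_emb Y (FF X) g"
    unfolding dc_emb_def FF_simps
  proof (intro conjI ballI)
    show "fst g ` pts Y \<subseteq> enc X ` PA X" unfolding g_def using qPA by auto
    show "inj_on (fst g) (pts Y)"
    proof (rule inj_onI)
      fix y1 y2 assume y: "y1 \<in> pts Y" "y2 \<in> pts Y" and e: "fst g y1 = fst g y2"
      then have qq: "q y1 = q y2" using inj_on_eq_iff[OF enc_inj[OF X] qPA[OF y(1)] qPA[OF y(2)]] unfolding g_def by simp
      have nP: "q (fst f x) \<noteq> q p" if "x \<in> pts X" for x using qf[OF that] unfolding q_def by simp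
      from PY[OF y(1)] PY[OF y(2)] show "y1 = y2"
      proof (elim disjE bexE)
        fix x assume "y1 = p" "x \<in> pts X" "y2 = fst f x"
        then show ?thesis using qq nP by metis
      next
        fix x assume "x \<in> pts X" "y1 = fst f x" "y2 = p"
        then show ?thesis using qq nP by metis
      next
        fix x1 x2 assume "x1 \<in> pts X" "y1 = fst f x1" "x2 \<in> pts X" "y2 = fst f x2"
        then show ?thesis using qq qf by simp
      qed simp
    qed
    show "snd g ` dists Y \<subseteq> DD X" unfolding g_def DD_def using Di2(1) by auto
    show "snd g 0 = 0" unfolding g_def using Di[OF z0] f0 by simp
  next
    fix d1 d2 assume d1: "d1 \<in> dists Y" and d2: "d2 \<in> dists Y"
    show "(d1 \<le> d2) = (snd g d1 \<le> snd g d2)"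
      unfolding g_def using dcD(4)[OF f Di2(1)[OF d1] Di2(1)[OF d2]] Di2(2)[OF d1] Di2(2)[OF d2] by simp
  next
    fix y1 y2 assume y1: "y1 \<in> pts Y" and y2: "y2 \<in> pts Y"
    have dd: "dec X (fst g y) = q y" if "y \<in> pts Y" for y unfolding g_def using dec_enc[OF X qPA[OF that]] by simp
    have "dF X (q y1) (q y2) = 2 * Di (dist Y y1 y2)"
    proof -
      have Dp0: "Di 0 = 0" using Di[OF z0] f0 by simp
      have qp: "pts X \<noteq> {} \<Longrightarrow> q p = Kf h" unfolding q_def by simp
      from PY[OF y1] PY[OF y2] show ?thesis
      proof (elim disjE bexE)
        assume "y1 = p" "y2 = p" then show ?thesis using fu_self[OF Y pY] Dp0 unfolding q_def by (simp add: kd_def)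
      next
        fix x assume a: "y1 = p" "x \<in> pts X" "y2 = fst f x"
        then have "pts X \<noteq> {}" by blast
        then show ?thesis using a qf[OF a(2)] qp by (simp add: h_def)
      next
        fix x assume a: "x \<in> pts X" "y1 = fst f x" "y2 = p"
        then have "pts X \<noteq> {}" by blast
        then show ?thesis using a qf[OF a(1)] qp fuD(5)[OF Y pY fx[OF a(1)]] by (simp add: h_def)
      next
        fix x1 x2 assume a: "x1 \<in> pts X" "y1 = fst f x1" "x2 \<in> pts X" "y2 = fst f x2"
        then show ?thesis using qf dcD(6)[OF f a(1,3)] Di[OF fuD(4)[OF X a(1,3)]] by simp
      qed
    qed
    then show "dF X (dec X (fst g y1)) (dec X (fst g y2)) = snd g (dist Y y1 y2)"
      using dd[OF y1] dd[OF y2] unfolding g_def by simp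
  qed
  moreover have "meq X (mcomp g f) (eta X)"
    unfolding meq_def eta_def g_def using qf Di by simp
  ultimately show ?thesis by blast
qed

lemma kat_prop: assumes X: "fin_ultra X" and Y: "fin_ultra Y" and o: "one_point_ext X Y f"
  shows "\<exists>g. dc_emb Y (FF X) g \<and> meq X (mcomp g f) (eta X)"
proof -
  have f: "dc_emb X Y f" using o unfolding one_point_ext_def by simp
  have "(fst f ` pts X = pts Y \<and> card (dists Y - snd f ` dists X) = 1) \<or>
      (card (pts Y - fst f ` pts X) = 1 \<and> snd f ` dists X = dists Y)"
    using o unfolding one_point_ext_def by simp
  then show ?thesis
  proof (elim disjE conjE)
    assume "fst f ` pts X = pts Y" "card (dists Y - snd f ` dists X) = 1"
    then show ?thesis using kat_A[OF X Y f] by simp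
  next
    assume "card (pts Y - fst f ` pts X) = 1" "snd f ` dists X = dists Y"
    then show ?thesis using kat_B[OF X Y f] by simp
  qed
qed

theorem proposition4p12:
  shows "\<exists>F Fm eta. katetov_functor F Fm eta"
proof (intro exI)
  have 1: "\<forall>X. fin_ultra X \<longrightarrow> fin_ultra (FF X)" using FF_ultra by blast
  have 2: "\<forall>X Y f. fin_ultra X \<and> fin_ultra Y \<and> dc_emb X Y f \<longrightarrow> dc_emb (FF X) (FF Y) (FFm X Y f)"
    using FFm_dc by blast
  have 3: "\<forall>X Y f f'. fin_ultra X \<and> fin_ultra Y \<and> dc_emb X Y f \<and> dc_emb X Y f' \<and> meq X f f'
        \<longrightarrow> meq (FF X) (FFm X Y f) (FFm X Y f')"
    using FFm_cong by blast
  have 4: "\<forall>X. fin_ultra X \<longrightarrow> meq (FF X) (FFm X X mid) mid" using FFm_id by blast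
  have 5: "\<forall>X Y Z f g. fin_ultra X \<and> fin_ultra Y \<and> fin_ultra Z \<and> dc_emb X Y f \<and> dc_emb Y Z g
        \<longrightarrow> meq (FF X) (FFm X Z (mcomp g f)) (mcomp (FFm Y Z g) (FFm X Y f))"
    using FFm_comp by blast
  have 6: "\<forall>X. fin_ultra X \<longrightarrow> dc_emb X (FF X) (eta X)" using eta_dc by blast
  have 7: "\<forall>X Y f. fin_ultra X \<and> fin_ultra Y \<and> dc_emb X Y f
        \<longrightarrow> meq X (mcomp (FFm X Y f) (eta X)) (mcomp (eta Y) f)"
    using nat_eta by blast
  have 8: "\<forall>X Y f. fin_ultra X \<and> fin_ultra Y \<and> one_point_ext X Y f
        \<longrightarrow> (\<exists>g. dc_emb Y (FF X) g \<and> meq X (mcomp g f) (eta X))"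
    using kat_prop by blast
  show "katetov_functor FF FFm eta"
    unfolding katetov_functor_def is_functor_def is_nat_trans_id_def
    apply (intro conjI)
           apply (fact 1)
          apply (fact 2)
         apply (fact 3)
        apply (fact 4)
       apply (fact 5)
      apply (fact 6)
     apply (fact 7)
    apply (fact 8)
    done
qed


end
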